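(* Let $(X_k^\diamond,U_k^\diamond)_{k\ge0}$ be the trajectory of $X_{k+1}=AX_k+BU_k+EW_k$, $X_0=X_{\mathrm{ini}}$, under $U_k^\diamond=KX_k^\diamond+F\,\mathbb E[W]$, and let $(\bar X_k^\diamond,\bar U_k^\diamond)_{k\ge0}$ be a corresponding stationary trajectory with law $(\mu_X^\diamond,\mu_U^\diamond)$. Then there exist constants $\beta>0$ and $p\in[0,1)$ such that for all $k\ge0$ $$\big\|(X_k^\diamond,U_k^\diamond)-(\bar X_k^\diamond,\bar U_k^\diamond)\big\|\le\beta p^k,$$ where $\|\cdot\|$ is the $\mathcal L^2$-norm $\|Z\|=\sqrt{\mathbb E[Z^\top Z]}$. Consequently, for every $\varepsilon>0$, $$\mathbb P\Big(\limsup_{k\to\infty}\big\{\|(X_k^\diamond,U_k^\diamond)-(\bar X_k^\diamond,\bar U_k^\diamond)\|_2\ge\varepsilon\big\}\Big)=0,$$ where $\|\cdot\|_2$ is the Euclidean norm applied pathwise.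
   Context: $A\in\mathbb R^{n_x\times n_x}$, $B\in\mathbb R^{n_x\times n_u}$, $E\in\mathbb R^{n_x\times n_w}$; $Q\succeq0$, $R\succ0$; $(A,B)$ stabilizable, $(A,Q^{1/2})$ detectable. $X_{\mathrm{ini}}$ square integrable; $W_0,W_1,\dots$ i.i.d. square integrable, independent of $X_{\mathrm{ini}}$, distributed as $W$. Stationary quantities: $P$ stabilizing positive semidefinite solution of $P=Q+A^\top(P-PB(R+B^\top PB)^{-1}B^\top P)A$; $K=-(R+B^\top PB)^{-1}B^\top PA$; $\tilde A=A+BK$ (Schur stable); $G$ the unique solution of $G=\tilde A^\top(PE+G)$; $F=-(R+B^\top PB)^{-1}B^\top(PE+G)$; $\tilde F=BF+E$. Let $X_\infty:=(I-\tilde A)^{-1}\tilde F\mathbb E[W]+\sum_{j=0}^\infty\tilde A^jE(W'_j-\mathbb E[W])$ for i.i.d. copies $W'_j$ of $W$, and let $(\mu_X^\diamond,\mu_U^\diamond)$ denote the joint law of $(X_\infty,KX_\infty+F\mathbb E[W])$. A corresponding stationary trajectory with law $(\mu_X^\diamond,\mu_U^\diamond)$ is a sequence of square-integrable $(\bar X_k,\bar U_k)$ with $\bar X_{k+1}=A\bar X_k+B\bar U_k+EW_k$ (driven by the same disturbances $W_k$), $\bar X_0=\bar X_{\mathrm{ini}}$ for some square-integrable $\bar X_{\mathrm{ini}}$, and $(\bar X_k,\bar U_k)$ having joint law $(\mu_X^\diamond,\mu_U^\diamond)$ for all $k$. *)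

theory Defs
  imports "HOL-Probability.Probability"
begin

(* Matrices are real^'m^'n (rows indexed by 'n); dimensions are type variables. *)

definition psd_mat :: "real^'n^'n \<Rightarrow> bool" where
  "psd_mat P \<longleftrightarrow> transpose P = P \<and> (\<forall>x. 0 \<le> x \<bullet> (P *v x))"

definition pd_mat :: "real^'n^'n \<Rightarrow> bool" where
  "pd_mat P \<longleftrightarrow> transpose P = P \<and> (\<forall>x. x \<noteq> 0 \<longrightarrow> 0 < x \<bullet> (P *v x))"

definition cmat :: "real^'m^'n \<Rightarrow> complex^'m^'n" where
  "cmat A = (\<chi> i j. complex_of_real (A $ i $ j))"

text \<open>Schur stability: every (complex) eigenvalue has modulus < 1.\<close>
definition schur_stable :: "real^'n^'n \<Rightarrow> bool" where
  "schur_stable A \<longleftrightarrow>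
     (\<forall>(l::complex) (v::complex^'n). v \<noteq> 0 \<and> cmat A *v v = l *s v \<longrightarrow> cmod l < 1)"

definition stabilizable :: "real^'n^'n \<Rightarrow> real^'m^'n \<Rightarrow> bool" where
  "stabilizable A B \<longleftrightarrow> (\<exists>K :: real^'n^'m. schur_stable (A + B ** K))"

definition detectable :: "real^'n^'n \<Rightarrow> real^'n^'p \<Rightarrow> bool" where
  "detectable A C \<longleftrightarrow> (\<exists>L :: real^'p^'n. schur_stable (A + L ** C))"

fun mat_pow :: "real^'n^'n \<Rightarrow> nat \<Rightarrow> real^'n^'n" where
  "mat_pow A 0 = mat 1"
| "mat_pow A (Suc j) = A ** mat_pow A j"

text \<open>X_infinity as a function of a sequence w of i.i.d. copies of W:
  (I - At)^{-1} Ft m + sum_j At^j E (w_j - m), where m = E[W].\<close>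
definition X_inf :: "real^'n^'n \<Rightarrow> real^'w^'n \<Rightarrow> real^'w^'n \<Rightarrow> real^'w
                      \<Rightarrow> (nat \<Rightarrow> real^'w) \<Rightarrow> real^'n" where
  "X_inf At Ft E m w = matrix_inv (mat 1 - At) *v (Ft *v m)
                       + (\<Sum>j. mat_pow At j *v (E *v (w j - m)))"

text \<open>The stationary joint law (mu_X, mu_U): law of (X_inf, K X_inf + F m) where the
  copies W'_j are i.i.d. with law muW (realised on the countable product space).\<close>
definition mu_diamond :: "real^'n^'n \<Rightarrow> real^'w^'n \<Rightarrow> real^'w^'n \<Rightarrow> real^'n^'u
      \<Rightarrow> real^'w^'u \<Rightarrow> real^'w \<Rightarrow> (real^'w) measure \<Rightarrow> ((real^'n) \<times> (real^'u)) measure" where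
  "mu_diamond At Ft E K F m muW =
     distr (Pi\<^sub>M (UNIV :: nat set) (\<lambda>_. muW)) borel
       (\<lambda>w. (X_inf At Ft E m w, K *v X_inf At Ft E m w + F *v m))"

end

theory Submission
  imports Defs "Jordan_Normal_Form.Spectral_Radius"
begin
no_notation Matrix.vec_index (infixl "$" 100)

definition ix :: "nat \<Rightarrow> 'n::finite" where
  "ix = (SOME f. bij_betw f {..<CARD('n)} UNIV)"

lemma ix_bij: "bij_betw (ix :: nat \<Rightarrow> 'n::finite) {..<CARD('n)} UNIV"
proof -
  obtain h :: "nat \<Rightarrow> 'n" where "bij_betw h {0..<card (UNIV::'n set)} UNIV"
    using ex_bij_betw_nat_finite[of "UNIV :: 'n set"] by auto
  hence "\<exists>f. bij_betw (f :: nat \<Rightarrow> 'n) {..<CARD('n)} UNIV" by (auto simp: lessThan_atLeast0)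
  thus ?thesis unfolding ix_def by (rule someI_ex)
qed

lemma ix_inj: "i < CARD('n) \<Longrightarrow> j < CARD('n) \<Longrightarrow> ((ix i :: 'n::finite) = ix j) = (i = j)"
  using ix_bij[where 'n='n] unfolding bij_betw_def inj_on_def by auto

lemma ix_surj: "\<exists>i < CARD('n). ix i = (a :: 'n::finite)"
proof -
  have "a \<in> ix ` {..<CARD('n)}" using ix_bij[where 'n='n] unfolding bij_betw_def by auto
  thus ?thesis by auto
qed

lemma sum_ix: "(\<Sum>b\<in>UNIV. g b) = (\<Sum>l<CARD('n). g (ix l :: 'n::finite))"
  using sum.reindex_bij_betw[OF ix_bij[where 'n='n], of g] by simp

definition toM :: "real^'n^'n \<Rightarrow> complex mat" where
  "toM X = Matrix.mat CARD('n) CARD('n) (\<lambda>(i,j). complex_of_real (X $ ix i $ ix j))"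

lemma toM_carrier: "toM (X :: real^'n^'n) \<in> carrier_mat CARD('n) CARD('n)"
  unfolding toM_def by simp

lemma toM_mult: "toM (X ** Y) = toM X * toM (Y :: real^'n^'n)"
proof (rule eq_matI)
  fix i j assume i: "i < dim_row (toM X * toM Y)" and j: "j < dim_col (toM X * toM Y)"
  hence i': "i < CARD('n)" and j': "j < CARD('n)" by (auto simp: toM_def)
  have "(toM X * toM Y) $$ (i, j) = (\<Sum>l = 0..<CARD('n). toM X $$ (i,l) * toM Y $$ (l,j))"
    using i j by (simp add: scalar_prod_def toM_def)
  also have "\<dots> = (\<Sum>l <CARD('n). complex_of_real (X $ ix i $ ix l * Y $ ix l $ ix j))"
    using i' j' by (simp add: toM_def lessThan_atLeast0)
  also have "\<dots> = complex_of_real (\<Sum>k\<in>UNIV. X $ ix i $ k * Y $ k $ ix j)"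
    by (simp add: sum_ix[of "\<lambda>k. X $ ix i $ k * Y $ k $ ix j"])
  also have "\<dots> = toM (X ** Y) $$ (i,j)"
    using i' j' by (simp add: toM_def matrix_matrix_mult_def)
  finally show "toM (X ** Y) $$ (i, j) = (toM X * toM Y) $$ (i, j)" by simp
qed (auto simp: toM_def)

lemma toM_one: "toM (Finite_Cartesian_Product.mat 1 :: real^'n^'n) = 1\<^sub>m CARD('n)"
  by (rule eq_matI) (auto simp: toM_def Finite_Cartesian_Product.mat_def ix_inj)

lemma mat_pow_Suc': "mat_pow X (Suc k) = mat_pow X k ** X"
  by (induction k) (simp_all add: matrix_mul_assoc)

lemma toM_pow: "toM (mat_pow (X :: real^'n^'n) k) = toM X ^\<^sub>m k"
proof (induction k)
  case 0 thus ?case using toM_one by (simp add: toM_def)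
next
  case (Suc k) thus ?case by (simp only: mat_pow_Suc' toM_mult pow_mat.simps)
qed

lemma toM_eigen:
  assumes "eigenvalue (toM (X :: real^'n^'n)) l"
  shows "\<exists>w. w \<noteq> 0 \<and> cmat X *v w = l *s w"
proof -
  obtain v where v: "v \<in> carrier_vec CARD('n)" "v \<noteq> 0\<^sub>v CARD('n)" "toM X *\<^sub>v v = l \<cdot>\<^sub>v v"
    using assms unfolding eigenvalue_def eigenvector_def by (auto simp: toM_def)
  define w :: "complex^'n" where "w = (\<chi> a. vec_index v (inv_into {..<CARD('n)} ix a))"
  have wix: "w $ ix i = vec_index v i" if "i < CARD('n)" for i
    using that ix_bij[where 'n='n] unfolding w_def
    by (simp add: bij_betw_inv_into_left)
  obtain i where i: "i < CARD('n)" "vec_index v i \<noteq> 0" using v(1,2) by (auto simp: vec_eq_iff)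
  have "w \<noteq> 0" using wix[OF i(1)] i(2) by auto
  moreover have "cmat X *v w = l *s w"
  proof (subst Finite_Cartesian_Product.vec_eq_iff, rule allI)
    fix a :: 'n
    obtain i where i: "i < CARD('n)" "ix i = a" using ix_surj by blast
    have "(cmat X *v w) $ a = (\<Sum>j<CARD('n). complex_of_real (X $ ix i $ ix j) * vec_index v j)"
      unfolding matrix_vector_mult_def cmat_def using wix i(2)[symmetric]
      by (simp add: sum_ix[where 'n='n])
    also have "\<dots> = vec_index (toM X *\<^sub>v v) i"
      using i v(1) by (simp add: toM_def scalar_prod_def lessThan_atLeast0)
    also have "\<dots> = l * w $ a" using v(3) i v(1) wix[OF i(1)] by simp
    finally show "(cmat X *v w) $ a = (l *s w) $ a" by simp
  qed
  ultimately show ?thesis by blast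
qed

lemma toM_eigen_rev:
  assumes "w \<noteq> 0" "cmat (X :: real^'n^'n) *v w = l *s w"
  shows "eigenvalue (toM X) l"
proof -
  define v where "v = Matrix.vec CARD('n) (\<lambda>i. w $ (ix i :: 'n))"
  have vc: "v \<in> carrier_vec CARD('n)" unfolding v_def by simp
  obtain a where a: "w $ a \<noteq> 0" using assms(1) by (auto simp: Finite_Cartesian_Product.vec_eq_iff)
  obtain i where i: "i < CARD('n)" "ix i = a" using ix_surj by blast
  have "v \<noteq> 0\<^sub>v CARD('n)"
  proof
    assume "v = 0\<^sub>v CARD('n)"
    hence "vec_index v i = 0" using i by simp
    thus False using a i unfolding v_def by simp
  qed
  moreover have "toM X *\<^sub>v v = l \<cdot>\<^sub>v v"
  proof (rule eq_vecI)
    fix i assume i: "i < dim_vec (l \<cdot>\<^sub>v v)"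
    hence i': "i < CARD('n)" unfolding v_def by simp
    have "vec_index (toM X *\<^sub>v v) i = (\<Sum>j<CARD('n). complex_of_real (X $ ix i $ ix j) * w $ ix j)"
      using i' by (simp add: toM_def v_def scalar_prod_def lessThan_atLeast0)
    also have "\<dots> = (cmat X *v w) $ ix i"
      unfolding matrix_vector_mult_def cmat_def
      by (simp add: sum_ix[where 'n='n])
    also have "\<dots> = l * w $ ix i" using assms(2) by simp
    also have "\<dots> = vec_index (l \<cdot>\<^sub>v v) i" using i' by (simp add: v_def)
    finally show "vec_index (toM X *\<^sub>v v) i = vec_index (l \<cdot>\<^sub>v v) i" .
  qed (simp add: toM_def v_def)
  ultimately show ?thesis using vc unfolding eigenvalue_def eigenvector_def
    by (auto simp: toM_def)
qed

lemma cmat_scale: "cmat (c *\<^sub>R (X :: real^'n^'m)) *v w = complex_of_real c *s (cmat X *v w)"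
  by (simp add: Finite_Cartesian_Product.vec_eq_iff matrix_vector_mult_def cmat_def sum_distrib_left
      mult_ac)

lemma mat_pow_scale: "mat_pow (c *\<^sub>R (X :: real^'n^'n)) k = c ^ k *\<^sub>R mat_pow X k"
proof (induction k)
  case 0 thus ?case by simp
next
  case (Suc k)
  thus ?case
    by (simp add: Finite_Cartesian_Product.vec_eq_iff matrix_matrix_mult_def scaleR_sum_right
        sum_distrib_left mult_ac)
qed

lemma schur_pow_bound:
  assumes "schur_stable (At :: real^'n^'n)"
  shows "\<exists>C p. 0 \<le> C \<and> 0 < p \<and> p < 1 \<and> (\<forall>k a b. \<bar>mat_pow At k $ a $ b\<bar> \<le> C * p ^ k)"
proof -
  have n: "0 < CARD('n)" by simp
  define \<rho> where "\<rho> = spectral_radius (toM At)"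
  obtain l0 where l0: "l0 \<in> spectrum (toM At)" "\<rho> = cmod l0"
    using spectral_radius_mem_max(1)[OF toM_carrier n] unfolding \<rho>_def by auto
  then obtain w where "w \<noteq> 0" "cmat At *v w = l0 *s w"
    using toM_eigen[of At l0] unfolding spectrum_def by auto
  hence rho1: "\<rho> < 1" using assms l0(2) unfolding schur_stable_def by blast
  have rho0: "0 \<le> \<rho>" using l0(2) by simp
  define p where "p = (1 + \<rho>) / 2"
  have p: "0 < p" "p < 1" "\<rho> < p" using rho1 rho0 unfolding p_def by auto
  define Y where "Y = (1/p) *\<^sub>R At"
  have "spectral_radius (toM Y) < 1"
  proof -
    obtain l where l: "l \<in> spectrum (toM Y)" "spectral_radius (toM Y) = cmod l"
      using spectral_radius_mem_max(1)[OF toM_carrier n] by auto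
    then obtain w where w: "w \<noteq> 0" "cmat Y *v w = l *s w"
      using toM_eigen[of Y l] unfolding spectrum_def by auto
    have "cmat At *v w = complex_of_real p *s (cmat Y *v w)"
      unfolding Y_def cmat_scale using p by (simp add: vector_smult_assoc)
    also have "\<dots> = (complex_of_real p * l) *s w" using w(2) by (simp add: vector_smult_assoc)
    finally have "eigenvalue (toM At) (complex_of_real p * l)"
      using toM_eigen_rev w(1) by blast
    hence "cmod (complex_of_real p * l) \<le> \<rho>"
      unfolding \<rho>_def using spectral_radius_mem_max(2)[OF toM_carrier n]
      unfolding spectrum_def by blast
    hence "p * cmod l \<le> \<rho>" using p by (simp add: norm_mult)
    hence "p * cmod l < p * 1" using p by linarith
    hence "cmod l < 1" using p by (simp add: mult_less_cancel_left)
    thus ?thesis using l by simp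
  qed
  then obtain c where c: "\<And>k. norm_bound (toM Y ^\<^sub>m k) c"
    using spectral_radius_jnf_norm_bound_less_1_upper_triangular[OF toM_carrier] by blast
  have bound: "\<bar>mat_pow At k $ a $ b\<bar> \<le> c * p ^ k" for k a b
  proof -
    obtain i where i: "i < CARD('n)" "ix i = a" using ix_surj by blast
    obtain j where j: "j < CARD('n)" "ix j = b" using ix_surj by blast
    have "\<bar>mat_pow Y k $ a $ b\<bar> \<le> c"
      using c[of k] i j unfolding toM_pow[symmetric] norm_bound_def by (simp add: toM_def, metis)
    hence "\<bar>(1/p)^k * mat_pow At k $ a $ b\<bar> \<le> c"
      unfolding Y_def mat_pow_scale by simp
    hence "\<bar>mat_pow At k $ a $ b\<bar> / p^k \<le> c" using p by (simp add: abs_mult power_one_over)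
    thus ?thesis using p by (simp add: pos_divide_le_eq)
  qed
  have "0 \<le> c"
  proof -
    have "\<bar>mat_pow At 0 $ undefined $ undefined\<bar> \<le> c * p ^ 0" by (rule bound)
    moreover have "0 \<le> \<bar>mat_pow At 0 $ undefined $ undefined\<bar>" by simp
    ultimately show ?thesis by simp
  qed
  thus ?thesis using bound p by blast
qed


lemma sq_sum_le: "(x + y)\<^sup>2 \<le> 2 * x\<^sup>2 + 2 * (y::real)\<^sup>2"
proof -
  have "0 \<le> (x - y)\<^sup>2" by simp
  thus ?thesis unfolding power2_sum power2_diff by linarith
qed

lemma vec_bound:
  assumes "\<And>a b. \<bar>(X :: real^'m^'n) $ a $ b\<bar> \<le> c"
  shows "norm (X *v x) \<le> (real CARD('n) * real CARD('m) * c) * norm x"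
proof -
  have "norm (X *v x) \<le> (\<Sum>a\<in>UNIV. \<bar>(X *v x) $ a\<bar>)" by (rule norm_le_l1_cart)
  also have "\<dots> \<le> (\<Sum>a\<in>UNIV. \<Sum>b\<in>UNIV. \<bar>X $ a $ b\<bar> * \<bar>x $ b\<bar>)"
  proof (intro sum_mono)
    fix a
    have "\<bar>(X *v x) $ a\<bar> = \<bar>\<Sum>b\<in>UNIV. X $ a $ b * x $ b\<bar>" by (simp add: matrix_vector_mult_def)
    also have "\<dots> \<le> (\<Sum>b\<in>UNIV. \<bar>X $ a $ b * x $ b\<bar>)" by (rule sum_abs)
    finally show "\<bar>(X *v x) $ a\<bar> \<le> (\<Sum>b\<in>UNIV. \<bar>X $ a $ b\<bar> * \<bar>x $ b\<bar>)" by (simp add: abs_mult)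
  qed
  also have "\<dots> \<le> (\<Sum>a\<in>(UNIV::'n set). \<Sum>b\<in>(UNIV::'m set). c * norm x)"
    by (intro sum_mono mult_mono assms component_le_norm_cart) (auto intro: order_trans[OF abs_ge_zero assms])
  also have "\<dots> = (real CARD('n) * real CARD('m) * c) * norm x" by simp
  finally show ?thesis .
qed

lemma mat_entry_bound: "\<exists>c\<ge>0. \<forall>a b. \<bar>(X :: real^'m^'n) $ a $ b\<bar> \<le> c"
proof (intro exI[of _ "\<Sum>a\<in>UNIV. \<Sum>b\<in>UNIV. \<bar>X $ a $ b\<bar>"] conjI allI)
  fix a b
  have "\<bar>X $ a $ b\<bar> \<le> (\<Sum>b\<in>UNIV. \<bar>X $ a $ b\<bar>)" by (rule member_le_sum) auto
  also have "\<dots> \<le> (\<Sum>a\<in>UNIV. \<Sum>b\<in>UNIV. \<bar>X $ a $ b\<bar>)"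
    by (rule member_le_sum[of a _ "\<lambda>a. \<Sum>b\<in>UNIV. \<bar>X $ a $ b\<bar>"]) (auto intro: sum_nonneg)
  finally show "\<bar>X $ a $ b\<bar> \<le> (\<Sum>a\<in>UNIV. \<Sum>b\<in>UNIV. \<bar>X $ a $ b\<bar>)" .
qed (auto intro: sum_nonneg)

lemma pow_vec_bound:
  assumes "schur_stable (At :: real^'n^'n)"
  shows "\<exists>C p. 0 \<le> C \<and> 0 < p \<and> p < 1 \<and> (\<forall>k x. norm (mat_pow At k *v x) \<le> C * p ^ k * norm x)"
proof -
  obtain C p where Cp: "0 \<le> C" "0 < p" "p < 1" "\<And>k a b. \<bar>mat_pow At k $ a $ b\<bar> \<le> C * p ^ k"
    using schur_pow_bound[OF assms] by blast
  have "norm (mat_pow At k *v x) \<le> (real CARD('n) * real CARD('n) * C) * p ^ k * norm x" for k x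
    using vec_bound[of "mat_pow At k" "C * p ^ k" x, OF Cp(4)] by (simp add: mult_ac)
  thus ?thesis using Cp by (intro exI[of _ "real CARD('n) * real CARD('n) * C"] exI[of _ p]) auto
qed

theorem lemma5:
  fixes A :: "real^'nx^'nx" and B :: "real^'nu^'nx" and E :: "real^'nw^'nx"
    and Q :: "real^'nx^'nx" and Qh :: "real^'nx^'nx" and R :: "real^'nu^'nu"
    and P :: "real^'nx^'nx" and K :: "real^'nx^'nu" and G :: "real^'nw^'nx"
    and F :: "real^'nw^'nu"
    and M :: "'a measure"
    and X_ini :: "'a \<Rightarrow> real^'nx" and W :: "nat \<Rightarrow> 'a \<Rightarrow> real^'nw"
    and Xd :: "nat \<Rightarrow> 'a \<Rightarrow> real^'nx" and Ud :: "nat \<Rightarrow> 'a \<Rightarrow> real^'nu"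
    and Xb :: "nat \<Rightarrow> 'a \<Rightarrow> real^'nx" and Ub :: "nat \<Rightarrow> 'a \<Rightarrow> real^'nu"
  assumes Q: "psd_mat Q" and R: "pd_mat R"
    and Qh: "psd_mat Qh" "Qh ** Qh = Q"
    and stab: "stabilizable A B" and det: "detectable A Qh"
    and P: "psd_mat P"
      "P = Q + transpose A ** (P - P ** B ** matrix_inv (R + transpose B ** P ** B)
                                   ** transpose B ** P) ** A"
    and K: "K = - (matrix_inv (R + transpose B ** P ** B) ** transpose B ** P ** A)"
    and P_stabilizing: "schur_stable (A + B ** K)"
    and G: "G = transpose (A + B ** K) ** (P ** E + G)"
    and F: "F = - (matrix_inv (R + transpose B ** P ** B) ** transpose B ** (P ** E + G))"
    and M: "prob_space M"
    and X_ini_rv: "X_ini \<in> borel_measurable M"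
    and X_ini_L2: "integrable M (\<lambda>\<omega>. (norm (X_ini \<omega>))\<^sup>2)"
    and W_rv: "\<And>k. W k \<in> borel_measurable M"
    and W_L2: "integrable M (\<lambda>\<omega>. (norm (W 0 \<omega>))\<^sup>2)"
    and W_ident: "\<And>k. distr M borel (W k) = distr M borel (W 0)"
    and indep: "prob_space.indep_sets M
        (\<lambda>i. case i of None \<Rightarrow> sets (vimage_algebra (space M) X_ini borel)
                       | Some k \<Rightarrow> sets (vimage_algebra (space M) (W k) borel))
        (UNIV :: nat option set)"
    and Xd0: "Xd 0 = X_ini"
    and Ud: "\<And>k \<omega>. Ud k \<omega> = K *v Xd k \<omega> + F *v prob_space.expectation M (W 0)"
    and Xd: "\<And>k \<omega>. Xd (Suc k) \<omega> = A *v Xd k \<omega> + B *v Ud k \<omega> + E *v W k \<omega>"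
    and Xb_rv: "\<And>k. Xb k \<in> borel_measurable M" "\<And>k. Ub k \<in> borel_measurable M"
    and Xb_L2: "\<And>k. integrable M (\<lambda>\<omega>. (norm (Xb k \<omega>))\<^sup>2)"
               "\<And>k. integrable M (\<lambda>\<omega>. (norm (Ub k \<omega>))\<^sup>2)"
    and Xb: "\<And>k \<omega>. Xb (Suc k) \<omega> = A *v Xb k \<omega> + B *v Ub k \<omega> + E *v W k \<omega>"
    and Xb_law: "\<And>k. distr M borel (\<lambda>\<omega>. (Xb k \<omega>, Ub k \<omega>)) =
        mu_diamond (A + B ** K) (B ** F + E) E K F (prob_space.expectation M (W 0))
                   (distr M borel (W 0))"
  shows "(\<exists>\<beta>>0. \<exists>p. 0 \<le> p \<and> p < 1 \<and> (\<forall>k.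
            sqrt (prob_space.expectation M
               (\<lambda>\<omega>. (norm ((Xd k \<omega>, Ud k \<omega>) - (Xb k \<omega>, Ub k \<omega>)))\<^sup>2)) \<le> \<beta> * p ^ k))
       \<and> (\<forall>\<epsilon>>0. measure M (limsup (\<lambda>k. {\<omega> \<in> space M.
             norm ((Xd k \<omega>, Ud k \<omega>) - (Xb k \<omega>, Ub k \<omega>)) \<ge> \<epsilon>})) = 0)"
proof -
  interpret prob_space M by (rule M)
  define At where "At = A + B ** K"
  define m where "m = expectation (W 0)"
  obtain C p where Cp: "0 \<le> C" "0 < p" "p < 1"
     "\<And>k x. norm (mat_pow At k *v x) \<le> C * p ^ k * norm x"
    using pow_vec_bound[OF P_stabilizing[folded At_def]] by blast
  obtain cK where cK: "0 \<le> cK" "\<And>a b. \<bar>K $ a $ b\<bar> \<le> cK" using mat_entry_bound[of K] by blast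
  define CK where "CK = real CARD('nu) * real CARD('nx) * cK"
  have CK: "0 \<le> CK" "\<And>x. norm (K *v x) \<le> CK * norm x"
    unfolding CK_def using cK vec_bound[of K cK] by auto
  have AEU1: "AE \<omega> in M. Ub k \<omega> = K *v Xb k \<omega> + F *v m" for k
  proof -
    define S where "S = {z :: (real^'nx) \<times> (real^'nu). snd z \<noteq> K *v fst z + F *v m}"
    have "closed {z :: (real^'nx) \<times> (real^'nu). snd z = K *v fst z + F *v m}"
      by (intro closed_Collect_eq continuous_intros
          bounded_linear.continuous_on[OF matrix_vector_mul_bounded_linear])
    hence "open S" unfolding S_def by (simp add: open_Collect_neg closed_def Collect_neg_eq[symmetric])
    hence Sb: "S \<in> sets borel" by simp
    have meas: "(\<lambda>\<omega>. (Xb k \<omega>, Ub k \<omega>)) \<in> borel_measurable M"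
      using measurable_Pair[OF Xb_rv(1)[of k] Xb_rv(2)[of k]] by (simp add: borel_prod)
    have "emeasure (mu_diamond At (B ** F + E) E K F m (distr M borel (W 0))) S = 0"
      unfolding mu_diamond_def distr_def emeasure_measure_of_conv
      by (simp add: S_def)
    hence "emeasure (distr M borel (\<lambda>\<omega>. (Xb k \<omega>, Ub k \<omega>))) S = 0"
      unfolding Xb_law At_def m_def .
    hence "emeasure M ((\<lambda>\<omega>. (Xb k \<omega>, Ub k \<omega>)) -` S \<inter> space M) = 0"
      by (simp add: emeasure_distr[OF meas Sb])
    moreover have "(\<lambda>\<omega>. (Xb k \<omega>, Ub k \<omega>)) -` S \<inter> space M \<in> sets M"
      using meas Sb by (rule measurable_sets)
    ultimately have "(\<lambda>\<omega>. (Xb k \<omega>, Ub k \<omega>)) -` S \<inter> space M \<in> null_sets M" by auto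
    thus ?thesis by (rule AE_I') (auto simp: S_def)
  qed
  hence AEU: "AE \<omega> in M. \<forall>k. Ub k \<omega> = K *v Xb k \<omega> + F *v m"
    by (simp add: AE_all_countable)
  define D where "D k \<omega> = Xd k \<omega> - Xb k \<omega>" for k \<omega>
  have AED: "AE \<omega> in M. \<forall>k. D k \<omega> = mat_pow At k *v D 0 \<omega> \<and> Ud k \<omega> - Ub k \<omega> = K *v D k \<omega>"
    using AEU
  proof (rule eventually_mono)
    fix \<omega> assume H: "\<forall>k. Ub k \<omega> = K *v Xb k \<omega> + F *v m"
    have U: "Ud k \<omega> - Ub k \<omega> = K *v D k \<omega>" for k
      using H unfolding Ud D_def m_def by (simp add: matrix_vector_mult_diff_distrib)
    have "D k \<omega> = mat_pow At k *v D 0 \<omega>" for k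
    proof (induction k)
      case 0 thus ?case by simp
    next
      case (Suc k)
      have "D (Suc k) \<omega> = A *v D k \<omega> + B *v (Ud k \<omega> - Ub k \<omega>)"
        unfolding D_def Xd Xb by (simp add: matrix_vector_mult_diff_distrib algebra_simps)
      also have "\<dots> = At *v D k \<omega>"
        unfolding U At_def by (simp add: matrix_vector_mult_add_rdistrib matrix_vector_mul_assoc)
      also have "\<dots> = mat_pow At (Suc k) *v D 0 \<omega>"
        unfolding Suc by (simp add: matrix_vector_mul_assoc)
      finally show ?case .
    qed
    thus "\<forall>k. D k \<omega> = mat_pow At k *v D 0 \<omega> \<and> Ud k \<omega> - Ub k \<omega> = K *v D k \<omega>"
      using U by blast
  qed
  define L where "L = (1 + CK\<^sup>2) * C\<^sup>2"
  have L0: "0 \<le> L" unfolding L_def by simp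
  define f where "f k \<omega> = (norm ((Xd k \<omega>, Ud k \<omega>) - (Xb k \<omega>, Ub k \<omega>)))\<^sup>2" for k \<omega>
  define g where "g \<omega> = (norm (D 0 \<omega>))\<^sup>2" for \<omega>
  have pw: "AE \<omega> in M. \<forall>k. f k \<omega> \<le> L * (p ^ k)\<^sup>2 * g \<omega>"
    using AED
  proof (rule eventually_mono)
    fix \<omega> assume H: "\<forall>k. D k \<omega> = mat_pow At k *v D 0 \<omega> \<and> Ud k \<omega> - Ub k \<omega> = K *v D k \<omega>"
    show "\<forall>k. f k \<omega> \<le> L * (p ^ k)\<^sup>2 * g \<omega>"
    proof
      fix k
      have e: "f k \<omega> = (norm (D k \<omega>))\<^sup>2 + (norm (K *v D k \<omega>))\<^sup>2"
      proof -
        have u: "Ud k \<omega> - Ub k \<omega> = K *v D k \<omega>" using H by blast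
        have "(Xd k \<omega>, Ud k \<omega>) - (Xb k \<omega>, Ub k \<omega>) = (D k \<omega>, K *v D k \<omega>)"
          using u by (simp add: D_def)
        thus ?thesis unfolding f_def by (simp add: norm_Pair)
      qed
      have d: "norm (D k \<omega>) \<le> C * p ^ k * norm (D 0 \<omega>)" using H Cp(4) by metis
      have "(norm (K *v D k \<omega>))\<^sup>2 \<le> (CK * norm (D k \<omega>))\<^sup>2"
        by (intro power_mono CK(2)) simp
      hence "f k \<omega> \<le> (1 + CK\<^sup>2) * (norm (D k \<omega>))\<^sup>2" unfolding e by (simp add: power_mult_distrib algebra_simps)
      also have "\<dots> \<le> (1 + CK\<^sup>2) * (C * p ^ k * norm (D 0 \<omega>))\<^sup>2"
        by (intro mult_left_mono power_mono d) auto
      also have "\<dots> = L * (p ^ k)\<^sup>2 * g \<omega>" unfolding L_def g_def by (simp add: power_mult_distrib)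
      finally show "f k \<omega> \<le> L * (p ^ k)\<^sup>2 * g \<omega>" .
    qed
  qed
  have Dm: "D 0 \<in> borel_measurable M" unfolding D_def Xd0 using X_ini_rv Xb_rv(1) by measurable
  have gint: "integrable M g"
  proof (rule Bochner_Integration.integrable_bound)
    show "integrable M (\<lambda>\<omega>. 2 * (norm (X_ini \<omega>))\<^sup>2 + 2 * (norm (Xb 0 \<omega>))\<^sup>2)"
      using X_ini_L2 Xb_L2(1)[of 0] by auto
    show "g \<in> borel_measurable M" unfolding g_def using Dm by measurable
    show "AE \<omega> in M. norm (g \<omega>) \<le> norm (2 * (norm (X_ini \<omega>))\<^sup>2 + 2 * (norm (Xb 0 \<omega>))\<^sup>2)"
    proof (rule AE_I2)
      fix \<omega>
      have t: "norm (D 0 \<omega>) \<le> norm (X_ini \<omega>) + norm (Xb 0 \<omega>)"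
        unfolding D_def Xd0 by (rule norm_triangle_ineq4)
      have "g \<omega> \<le> (norm (X_ini \<omega>) + norm (Xb 0 \<omega>))\<^sup>2"
        unfolding g_def by (intro power_mono t) simp
      also have "\<dots> \<le> 2 * (norm (X_ini \<omega>))\<^sup>2 + 2 * (norm (Xb 0 \<omega>))\<^sup>2"
        by (rule sq_sum_le)
      finally show "norm (g \<omega>) \<le> norm (2 * (norm (X_ini \<omega>))\<^sup>2 + 2 * (norm (Xb 0 \<omega>))\<^sup>2)"
        unfolding g_def by simp
    qed
  qed
  have Eg0: "0 \<le> expectation g" unfolding g_def by simp
  have Ef: "expectation (f k) \<le> L * (p ^ k)\<^sup>2 * expectation g" for k
  proof (cases "integrable M (f k)")
    case True
    have "expectation (f k) \<le> expectation (\<lambda>\<omega>. L * (p ^ k)\<^sup>2 * g \<omega>)"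
      using True gint pw by (intro integral_mono_AE) (auto elim: eventually_mono)
    thus ?thesis by simp
  next
    case False thus ?thesis using L0 Eg0 by (simp add: not_integrable_integral_eq)
  qed
  define \<beta> where "\<beta> = sqrt (L * expectation g) + 1"
  have bpos: "0 < \<beta>"
  proof -
    have "0 \<le> sqrt (L * expectation g)" using L0 Eg0 by simp
    thus "0 < \<beta>" unfolding \<beta>_def by linarith
  qed
  have bnd: "sqrt (expectation (f k)) \<le> \<beta> * p ^ k" for k
  proof -
    have "sqrt (expectation (f k)) \<le> sqrt (L * (p ^ k)\<^sup>2 * expectation g)"
      using Ef by (rule real_sqrt_le_mono)
    also have "\<dots> = sqrt (L * expectation g) * p ^ k"
      using Cp(2) by (simp add: real_sqrt_mult mult_ac)
    also have "\<dots> \<le> \<beta> * p ^ k" unfolding \<beta>_def using Cp(2) by (simp add: mult_right_mono)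
    finally show ?thesis .
  qed
  have part1: "\<exists>\<beta>>0. \<exists>p. 0 \<le> p \<and> p < 1 \<and> (\<forall>k. sqrt (expectation (f k)) \<le> \<beta> * p ^ k)"
    using bpos bnd Cp(2,3) less_imp_le by blast
  have part2: "measure M (limsup (\<lambda>k. {\<omega> \<in> space M.
             norm ((Xd k \<omega>, Ud k \<omega>) - (Xb k \<omega>, Ub k \<omega>)) \<ge> \<epsilon>})) = 0" if \<epsilon>: "\<epsilon> > 0" for \<epsilon>
  proof -
    let ?S = "limsup (\<lambda>k. {\<omega> \<in> space M. norm ((Xd k \<omega>, Ud k \<omega>) - (Xb k \<omega>, Ub k \<omega>)) \<ge> \<epsilon>})"
    obtain N where N: "N \<in> null_sets M" "\<And>\<omega>. \<omega> \<in> space M - N \<Longrightarrow> \<forall>k. f k \<omega> \<le> L * (p ^ k)\<^sup>2 * g \<omega>"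
      using pw by (rule AE_E3) blast
    have sub: "?S \<subseteq> N"
    proof
      fix \<omega> assume w: "\<omega> \<in> ?S"
      hence sp: "\<omega> \<in> space M" unfolding limsup_INF_SUP by auto
      show "\<omega> \<in> N"
      proof (rule ccontr)
        assume "\<omega> \<notin> N"
        hence b: "\<forall>k. f k \<omega> \<le> L * (p ^ k)\<^sup>2 * g \<omega>" using N(2) sp by blast
        have "(\<lambda>k. sqrt (L * g \<omega>) * p ^ k) \<longlonglongrightarrow> sqrt (L * g \<omega>) * 0"
          by (intro tendsto_mult tendsto_const LIMSEQ_power_zero) (use Cp in auto)
        hence "\<forall>\<^sub>F k in sequentially. sqrt (L * g \<omega>) * p ^ k < \<epsilon>"
          using \<epsilon> by (auto dest: order_tendstoD(2))
        then obtain n where n: "\<And>k. k \<ge> n \<Longrightarrow> sqrt (L * g \<omega>) * p ^ k < \<epsilon>"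
          unfolding eventually_sequentially by blast
        have "norm ((Xd k \<omega>, Ud k \<omega>) - (Xb k \<omega>, Ub k \<omega>)) < \<epsilon>" if "k \<ge> n" for k
        proof -
          have "norm ((Xd k \<omega>, Ud k \<omega>) - (Xb k \<omega>, Ub k \<omega>)) = sqrt (f k \<omega>)"
            unfolding f_def by simp
          also have "\<dots> \<le> sqrt (L * (p ^ k)\<^sup>2 * g \<omega>)" using b by (simp add: real_sqrt_le_mono)
          also have "\<dots> = sqrt (L * g \<omega>) * p ^ k"
            using Cp(2) by (simp add: real_sqrt_mult mult_ac)
          also have "\<dots> < \<epsilon>" using n that .
          finally show ?thesis .
        qed
        thus False using w unfolding limsup_INF_SUP by (auto simp: not_le[symmetric])
      qed
    qed
    show ?thesis
    proof (cases "?S \<in> sets M")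
      case True
      thus ?thesis using null_sets_subset[OF N(1) True sub] by (simp add: measure_eq_0_null_sets)
    next
      case False thus ?thesis by (rule measure_notin_sets)
    qed
  qed
  show ?thesis using part1 part2 unfolding f_def by blast
qed

end
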